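(* Let $\mathcal{X}\subseteq\mathbb{R}^d$, $\sigma,\varepsilon>0$, and $\mathcal{H}\subseteq\{-1,+1\}^{\mathbb{R}^d}$. Then the online learner described below (Algorithm 2) guarantees, for every $T$ and every sequence $(x_1,y_1),\dots,(x_T,y_T)\in\mathcal{X}\times\{-1,+1\}$, $$\sum_{t=1}^T\mathbb{E}\,\mathbb{1}[\hat y_t\neq y_t]-\mathsf{OPT}^{\sigma,\varepsilon}_{\mathrm{gauss}}\le\sqrt{T\cdot\mathsf{vc}(\mathcal{H})\ln\!\left(\frac{c\,e\,\left|\mathsf{C}\!\left(\mathcal{X},\|\cdot\|_2,\sqrt{\pi/32}\,\sigma\varepsilon\right)\right|}{\varepsilon^2}\right)},$$ where $c>0$ is an absolute constant and $\mathsf{OPT}^{\sigma,\varepsilon}_{\mathrm{gauss}}=\min_{h\in\mathcal{H}}\sum_{t=1}^T\mathbb{1}\!\left[y_t\,\mathbb{E}_{z\sim\mathcal{N}(0,I_d)}[h(x_t+\sigma z)]\le\varepsilon\right]$.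
   Context: Online binary classification: on rounds $t=1,\dots,T$ the adversary reveals $x_t$, the (possibly randomized) learner outputs $\hat y_t\in\{-1,+1\}$, then $y_t\in\{-1,+1\}$ is revealed; the expectation is over the learner's randomness. $\mathsf{vc}$ is the VC dimension. A $\gamma$-cover of $\mathcal{X}$ w.r.t. $\|\cdot\|_2$ is a set $\mathcal{Z}\subseteq\mathcal{X}$ with every $x\in\mathcal{X}$ within $\ell_2$-distance $\gamma$ of some element of $\mathcal{Z}$; $\mathsf{C}(\mathcal{X},\|\cdot\|_2,\gamma)$ denotes one of minimal cardinality. Algorithm 2: set $\tilde\varepsilon=\varepsilon/4$ and $\gamma=\sigma\tilde\varepsilon/\sqrt{2/\pi}$ $(=\sqrt{\pi/32}\,\sigma\varepsilon)$. Let $\mathcal{Z}=\mathsf{C}(\mathcal{X},\|\cdot\|_2,\gamma)$ and fix $\phi:\mathcal{X}\to\mathcal{Z}$ with $\|x-\phi(x)\|_2\le\gamma$. For each $\tilde x\in\mathcal{Z}$ fix points $z_1,\dots,z_M\in\mathbb{R}^d$ (depending on $\tilde x$), with $M=O(\mathsf{vc}(\mathcal{H})/\tilde\varepsilon^2)$, such that for all $y\in\{\pm1\}$ and $h\in\mathcal{H}$, $\left|\Pr_{z\sim\mathcal{N}(0,I_d)}[h(\tilde x+\sigma z)=y]-\frac1M\sum_{i=1}^M\mathbb{1}[h(\tilde x+\sigma z_i)=y]\right|\le\tilde\varepsilon$. Let $\mathcal{S}=\bigcup_{\tilde x\in\mathcal{Z}}\{\tilde x+\sigma z_1,\dots,\tilde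 x+\sigma z_M\}$ and $\mathcal{H}|_{\mathcal{S}}$ the restrictions of $\mathcal{H}$ to $\mathcal{S}$. Initialize $P_1$ uniform on $\mathcal{H}|_{\mathcal{S}}$, $\eta=\sqrt{8\ln|\mathcal{H}|_{\mathcal{S}}|/T}$. At round $t$, let $\tilde x_t=\phi(x_t)$, draw $h\sim P_t$, and predict $\hat y_t=+1$ if $\frac1M\sum_{i=1}^M\mathbb{1}[h(\tilde x_t+\sigma z_i)=+1]\ge\frac12$, else $-1$; after $y_t$ is revealed set $P_{t+1}(h)\propto P_t(h)\exp\!\left(-\eta\,\mathbb{1}\!\left[\frac1M\sum_{i=1}^M\mathbb{1}[h(\tilde x_t+\sigma z_i)\neq y_t]\ge\frac12\right]\right)$. *)

theory Defs
  imports "HOL-Probability.Probability"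
begin

(* R^d is represented by functions nat => real vanishing at coordinates >= d *)
definition Rd :: "nat \<Rightarrow> (nat \<Rightarrow> real) set" where
  "Rd d = {x. \<forall>i\<ge>d. x i = 0}"

definition l2norm :: "nat \<Rightarrow> (nat \<Rightarrow> real) \<Rightarrow> real" where
  "l2norm d x = sqrt (\<Sum>i<d. (x i)\<^sup>2)"

definition l2dist :: "nat \<Rightarrow> (nat \<Rightarrow> real) \<Rightarrow> (nat \<Rightarrow> real) \<Rightarrow> real" where
  "l2dist d x x' = l2norm d (\<lambda>i. x i - x' i)"

definition shift :: "(nat \<Rightarrow> real) \<Rightarrow> real \<Rightarrow> (nat \<Rightarrow> real) \<Rightarrow> (nat \<Rightarrow> real)" where
  "shift x s z = (\<lambda>i. x i + s * z i)"

definition is_cover :: "nat \<Rightarrow> (nat \<Rightarrow> real) set \<Rightarrow> real \<Rightarrow> (nat \<Rightarrow> real) set \<Rightarrow> bool" where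
  "is_cover d X \<gamma> Z \<longleftrightarrow> Z \<subseteq> X \<and> (\<forall>x\<in>X. \<exists>z\<in>Z. l2dist d x z \<le> \<gamma>)"

definition covering_number :: "nat \<Rightarrow> (nat \<Rightarrow> real) set \<Rightarrow> real \<Rightarrow> nat" where
  "covering_number d X \<gamma> = (LEAST k. \<exists>Z. finite Z \<and> is_cover d X \<gamma> Z \<and> card Z = k)"

definition std_gauss :: "nat \<Rightarrow> (nat \<Rightarrow> real) measure" where
  "std_gauss d = PiM {..<d} (\<lambda>_. std_normal_distribution)"

definition ext :: "nat \<Rightarrow> (nat \<Rightarrow> real) \<Rightarrow> (nat \<Rightarrow> real)" where
  "ext d z = (\<lambda>i. if i < d then z i else 0)"

definition gauss_prob :: "nat \<Rightarrow> real \<Rightarrow> ((nat \<Rightarrow> real) \<Rightarrow> real) \<Rightarrow> (nat \<Rightarrow> real) \<Rightarrow> real \<Rightarrow> real" where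
  "gauss_prob d \<sigma> h x y = measure (std_gauss d) {z \<in> space (std_gauss d). h (shift x \<sigma> (ext d z)) = y}"

definition gauss_exp :: "nat \<Rightarrow> real \<Rightarrow> ((nat \<Rightarrow> real) \<Rightarrow> real) \<Rightarrow> (nat \<Rightarrow> real) \<Rightarrow> real" where
  "gauss_exp d \<sigma> h x = (\<integral>z. h (shift x \<sigma> (ext d z)) \<partial>std_gauss d)"

definition shatters :: "((nat \<Rightarrow> real) \<Rightarrow> real) set \<Rightarrow> (nat \<Rightarrow> real) set \<Rightarrow> bool" where
  "shatters H A \<longleftrightarrow> (\<forall>B\<subseteq>A. \<exists>h\<in>H. \<forall>a\<in>A. (h a = 1 \<longleftrightarrow> a \<in> B))"

definition finite_vc :: "nat \<Rightarrow> ((nat \<Rightarrow> real) \<Rightarrow> real) set \<Rightarrow> bool" where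
  "finite_vc d H \<longleftrightarrow> (\<exists>n. \<forall>A. finite A \<and> A \<subseteq> Rd d \<and> shatters H A \<longrightarrow> card A \<le> n)"

definition vc_dim :: "nat \<Rightarrow> ((nat \<Rightarrow> real) \<Rightarrow> real) set \<Rightarrow> nat" where
  "vc_dim d H = Sup {card A | A. finite A \<and> A \<subseteq> Rd d \<and> shatters H A}"

(* OPT^{sigma,eps}_gauss, rounds indexed t = 0..T-1 *)
definition opt_gauss :: "nat \<Rightarrow> real \<Rightarrow> real \<Rightarrow> ((nat \<Rightarrow> real) \<Rightarrow> real) set \<Rightarrow> nat
    \<Rightarrow> (nat \<Rightarrow> nat \<Rightarrow> real) \<Rightarrow> (nat \<Rightarrow> real) \<Rightarrow> real" where
  "opt_gauss d \<sigma> \<epsilon> H T x y =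
     real (Min ((\<lambda>h. card {t\<in>{..<T}. y t * gauss_exp d \<sigma> h (x t) \<le> \<epsilon>}) ` H))"

definition alg2_eps :: "real \<Rightarrow> real" where
  "alg2_eps \<epsilon> = \<epsilon> / 4"

definition alg2_gamma :: "real \<Rightarrow> real \<Rightarrow> real" where
  "alg2_gamma \<sigma> \<epsilon> = \<sigma> * alg2_eps \<epsilon> / sqrt (2 / pi)"

(* the admissible choices of Z, phi, M, z_1..z_M (z-points indexed 0..M-1) *)
definition alg2_setup :: "nat \<Rightarrow> (nat \<Rightarrow> real) set \<Rightarrow> real \<Rightarrow> real \<Rightarrow> ((nat \<Rightarrow> real) \<Rightarrow> real) set
    \<Rightarrow> (nat \<Rightarrow> real) set \<Rightarrow> ((nat \<Rightarrow> real) \<Rightarrow> (nat \<Rightarrow> real)) \<Rightarrow> nat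
    \<Rightarrow> ((nat \<Rightarrow> real) \<Rightarrow> nat \<Rightarrow> (nat \<Rightarrow> real)) \<Rightarrow> bool" where
  "alg2_setup d X \<sigma> \<epsilon> H Z \<phi> M zs \<longleftrightarrow>
     finite Z \<and> is_cover d X (alg2_gamma \<sigma> \<epsilon>) Z \<and>
     (\<forall>Z'. finite Z' \<and> is_cover d X (alg2_gamma \<sigma> \<epsilon>) Z' \<longrightarrow> card Z \<le> card Z') \<and>
     (\<forall>x\<in>X. \<phi> x \<in> Z \<and> l2dist d x (\<phi> x) \<le> alg2_gamma \<sigma> \<epsilon>) \<and>
     M \<ge> 1 \<and>
     (\<forall>xt\<in>Z. \<forall>i<M. zs xt i \<in> Rd d) \<and>
     (\<forall>xt\<in>Z. \<forall>y\<in>{-1, 1}. \<forall>h\<in>H.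
        \<bar>gauss_prob d \<sigma> h xt y
          - (1 / real M) * (\<Sum>i<M. if h (shift xt \<sigma> (zs xt i)) = y then 1 else 0)\<bar>
        \<le> alg2_eps \<epsilon>)"

definition alg2_S :: "(nat \<Rightarrow> real) set \<Rightarrow> real \<Rightarrow> nat \<Rightarrow> ((nat \<Rightarrow> real) \<Rightarrow> nat \<Rightarrow> (nat \<Rightarrow> real))
    \<Rightarrow> (nat \<Rightarrow> real) set" where
  "alg2_S Z \<sigma> M zs = (\<Union>xt\<in>Z. {shift xt \<sigma> (zs xt i) | i. i < M})"

definition restr_class :: "((nat \<Rightarrow> real) \<Rightarrow> real) set \<Rightarrow> (nat \<Rightarrow> real) set \<Rightarrow> ((nat \<Rightarrow> real) \<Rightarrow> real) set" where
  "restr_class H S = (\<lambda>h. restrict h S) ` H"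

definition alg2_pred :: "real \<Rightarrow> nat \<Rightarrow> ((nat \<Rightarrow> real) \<Rightarrow> nat \<Rightarrow> (nat \<Rightarrow> real))
    \<Rightarrow> ((nat \<Rightarrow> real) \<Rightarrow> real) \<Rightarrow> (nat \<Rightarrow> real) \<Rightarrow> real" where
  "alg2_pred \<sigma> M zs h xt =
     (if (1 / real M) * (\<Sum>i<M. if h (shift xt \<sigma> (zs xt i)) = 1 then 1 else 0) \<ge> 1 / 2
      then 1 else -1)"

definition alg2_loss :: "real \<Rightarrow> nat \<Rightarrow> ((nat \<Rightarrow> real) \<Rightarrow> nat \<Rightarrow> (nat \<Rightarrow> real))
    \<Rightarrow> ((nat \<Rightarrow> real) \<Rightarrow> real) \<Rightarrow> (nat \<Rightarrow> real) \<Rightarrow> real \<Rightarrow> real" where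
  "alg2_loss \<sigma> M zs h xt y =
     (if (1 / real M) * (\<Sum>i<M. if h (shift xt \<sigma> (zs xt i)) \<noteq> y then 1 else 0) \<ge> 1 / 2
      then 1 else 0)"

(* exponential weights: P_{t+1} (0-indexed: hedge ... t) *)
primrec hedge :: "'g set \<Rightarrow> real \<Rightarrow> (nat \<Rightarrow> 'g \<Rightarrow> real) \<Rightarrow> nat \<Rightarrow> 'g \<Rightarrow> real" where
  "hedge G \<eta> L 0 g = 1 / real (card G)"
| "hedge G \<eta> L (Suc t) g =
     hedge G \<eta> L t g * exp (- \<eta> * L t g) / (\<Sum>g'\<in>G. hedge G \<eta> L t g' * exp (- \<eta> * L t g'))"

(* sum_{t=1}^T E 1[yhat_t \<noteq> y_t] for Algorithm 2 (rounds indexed 0..T-1) *)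
definition alg2_expected_mistakes :: "real \<Rightarrow> ((nat \<Rightarrow> real) \<Rightarrow> real) set
    \<Rightarrow> (nat \<Rightarrow> real) set \<Rightarrow> ((nat \<Rightarrow> real) \<Rightarrow> (nat \<Rightarrow> real)) \<Rightarrow> nat
    \<Rightarrow> ((nat \<Rightarrow> real) \<Rightarrow> nat \<Rightarrow> (nat \<Rightarrow> real)) \<Rightarrow> nat \<Rightarrow> (nat \<Rightarrow> nat \<Rightarrow> real) \<Rightarrow> (nat \<Rightarrow> real) \<Rightarrow> real" where
  "alg2_expected_mistakes \<sigma> H Z \<phi> M zs T x y =
     (let G = restr_class H (alg2_S Z \<sigma> M zs);
          \<eta> = sqrt (8 * ln (real (card G)) / real T);
          L = (\<lambda>t h. alg2_loss \<sigma> M zs h (\<phi> (x t)) (y t));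
          P = hedge G \<eta> L
      in (\<Sum>t<T. \<Sum>h\<in>G. P t h * (if alg2_pred \<sigma> M zs h (\<phi> (x t)) \<noteq> y t then 1 else 0)))"

end

theory Submission
  imports Defs
begin

definition rr :: "real \<Rightarrow> real \<Rightarrow> real" where "rr a t = exp (a*t - a^2/2)"

lemma std_mult_rr: "std_normal_density t * rr a t = normal_density a 1 t"
proof -
  have "exp (- t\<^sup>2 / 2) * exp (a*t - a^2/2) = exp (-(t-a)\<^sup>2 / 2)"
    by (simp add: exp_add[symmetric] power2_eq_square algebra_simps)
  then show ?thesis unfolding normal_density_def rr_def by simp
qed

lemma shift1:
  assumes A: "A \<in> sets borel"
  shows "emeasure std_normal_distribution {t. t + a \<in> A} = emeasure (density lborel (normal_density a 1)) A"
proof -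
  have "emeasure std_normal_distribution {t. t + a \<in> A} =
     (\<integral>\<^sup>+t. ennreal (std_normal_density t) * indicator {t. t + a \<in> A} t \<partial>lborel)"
    using A by (subst emeasure_density) (auto simp: mult.commute)
  also have "\<dots> = (\<integral>\<^sup>+t. ennreal (normal_density a 1 (a + 1 * t)) * indicator A (a + 1 * t) \<partial>lborel)"
    by (intro nn_integral_cong) (auto simp: normal_density_def indicator_def add.commute)
  also have "\<dots> = (\<integral>\<^sup>+t. ennreal (normal_density a 1 t) * indicator A t \<partial>lborel)"
    using A by (subst nn_integral_real_affine[of _ 1 a]) auto
  also have "\<dots> = emeasure (density lborel (normal_density a 1)) A"
    using A by (subst emeasure_density) (auto simp: mult.commute)
  finally show ?thesis .
qed

definition NN :: "nat set \<Rightarrow> (nat \<Rightarrow> real) measure" where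
  "NN I = PiM I (\<lambda>_. std_normal_distribution)"
definition Mv :: "(nat \<Rightarrow> real) \<Rightarrow> nat \<Rightarrow> real measure" where
  "Mv v i = density lborel (normal_density (v i) 1)"
definition sh :: "nat set \<Rightarrow> (nat \<Rightarrow> real) \<Rightarrow> (nat \<Rightarrow> real) \<Rightarrow> (nat \<Rightarrow> real)" where
  "sh I v z = (\<lambda>i\<in>I. z i + v i)"
definition LL :: "nat set \<Rightarrow> (nat \<Rightarrow> real) \<Rightarrow> (nat \<Rightarrow> real) \<Rightarrow> real" where
  "LL I v z = (\<Prod>i\<in>I. rr (v i) (z i))"

lemma sets_Mv[simp]: "sets (Mv v i) = sets borel" by (simp add: Mv_def)
lemma space_Mv[simp]: "space (Mv v i) = UNIV" by (simp add: Mv_def)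

lemma pps_Mv: "product_prob_space (Mv v)"
  by (intro product_prob_spaceI) (simp add: Mv_def prob_space_normal_density)

lemma pps_N1: "product_prob_space (\<lambda>_::nat. std_normal_distribution)"
  by (intro product_prob_spaceI) (simp add: prob_space_normal_density)

lemma prob_NN: "prob_space (NN I)"
  unfolding NN_def by (intro prob_space_PiM) (simp add: prob_space_normal_density)

lemma space_NN: "space (NN I) = PiE I (\<lambda>_. UNIV)"
  by (simp add: NN_def space_PiM)

lemma sets_NN: "sets (NN I) = sets (PiM I (\<lambda>_. borel))"
  unfolding NN_def by (intro sets_PiM_cong) auto

lemma sets_PiM_Mv: "sets (PiM I (Mv v)) = sets (PiM I (\<lambda>_. borel))"
  by (intro sets_PiM_cong) auto

lemma sh_meas: "sh I v \<in> measurable (NN I) (PiM I (Mv v))"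
  unfolding sh_def
  apply (rule measurable_restrict)
  apply (subst measurable_cong_sets[OF sets_NN refl])
  apply (subst measurable_cong_sets[OF refl sets_Mv])
  by measurable

lemma distr_sh:
  assumes I: "finite I"
  shows "distr (NN I) (PiM I (Mv v)) (sh I v) = PiM I (Mv v)"
proof -
  interpret P: product_prob_space "Mv v" by (rule pps_Mv)
  interpret Q: product_prob_space "\<lambda>_::nat. std_normal_distribution" by (rule pps_N1)
  show ?thesis
  proof (rule P.PiM_eqI[OF I])
    show "sets (distr (NN I) (PiM I (Mv v)) (sh I v)) = sets (PiM I (Mv v))" by simp
  next
    fix A assume A: "\<And>i. i \<in> I \<Longrightarrow> A i \<in> sets (Mv v i)"
    have pre: "sh I v -` PiE I A \<inter> space (NN I) = PiE I (\<lambda>i. {t. t + v i \<in> A i})"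
      by (auto simp: sh_def space_NN PiE_iff)
    have "emeasure (distr (NN I) (PiM I (Mv v)) (sh I v)) (PiE I A) =
          emeasure (NN I) (PiE I (\<lambda>i. {t. t + v i \<in> A i}))"
      using A by (subst emeasure_distr[OF sh_meas]) (auto intro!: sets_PiM_I_finite I simp: pre)
    also have "\<dots> = (\<Prod>i\<in>I. emeasure std_normal_distribution {t. t + v i \<in> A i})"
      unfolding NN_def using A I
      by (subst Q.emeasure_PiM) auto
    also have "\<dots> = (\<Prod>i\<in>I. emeasure (Mv v i) (A i))"
      using A by (intro prod.cong refl) (simp add: shift1 Mv_def)
    finally show "emeasure (distr (NN I) (PiM I (Mv v)) (sh I v)) (PiE I A) = (\<Prod>i\<in>I. emeasure (Mv v i) (A i))" .
  qed
qed

lemma LL_meas[measurable]: "(\<lambda>z. LL I v z) \<in> borel_measurable (NN I)"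
proof -
  have c: "(\<lambda>z. rr (v i) (z i)) \<in> borel_measurable (PiM I (\<lambda>_. borel))" if "i \<in> I" for i
    unfolding rr_def using that by measurable
  show ?thesis unfolding LL_def
    apply (subst measurable_cong_sets[OF sets_NN refl])
    by (rule borel_measurable_prod) (rule c)
qed

lemma rr_pos: "rr a t > 0" by (simp add: rr_def)

lemma LL_pos: "LL I v z > 0" unfolding LL_def by (intro prod_pos) (simp add: rr_pos)

lemma indicator_PiE_prod:
  assumes "z \<in> PiE I (\<lambda>_. UNIV)" "finite I"
  shows "(indicator (PiE I A) z :: ennreal) = (\<Prod>i\<in>I. indicator (A i) (z i))"
proof (cases "z \<in> PiE I A")
  case True then show ?thesis by (auto simp: PiE_iff)
next
  case False
  with assms obtain i where "i \<in> I" "z i \<notin> A i" by (auto simp: PiE_iff)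
  then show ?thesis using False
    using assms(2) by (auto intro!: prod_zero[symmetric] bexI[of _ i])
qed

lemma density_LL:
  assumes I: "finite I"
  shows "density (NN I) (\<lambda>z. ennreal (LL I v z)) = PiM I (Mv v)"
proof -
  interpret P: product_prob_space "Mv v" by (rule pps_Mv)
  interpret Q: product_prob_space "\<lambda>_::nat. std_normal_distribution" by (rule pps_N1)
  show ?thesis
  proof (rule P.PiM_eqI[OF I])
    show "sets (density (NN I) (\<lambda>z. ennreal (LL I v z))) = sets (PiM I (Mv v))"
      by (simp add: sets_NN sets_PiM_Mv)
  next
    fix A assume A: "\<And>i. i \<in> I \<Longrightarrow> A i \<in> sets (Mv v i)"
    have PA: "PiE I A \<in> sets (NN I)"
      using A unfolding sets_NN by (auto intro!: sets_PiM_I_finite I)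
    have "emeasure (density (NN I) (\<lambda>z. ennreal (LL I v z))) (PiE I A) =
       (\<integral>\<^sup>+z. ennreal (LL I v z) * indicator (PiE I A) z \<partial>NN I)"
      using PA by (subst emeasure_density) auto
    also have "\<dots> = (\<integral>\<^sup>+z. (\<Prod>i\<in>I. ennreal (rr (v i) (z i)) * indicator (A i) (z i)) \<partial>NN I)"
    proof (intro nn_integral_cong)
      fix z assume z: "z \<in> space (NN I)"
      have "ennreal (LL I v z) = (\<Prod>i\<in>I. ennreal (rr (v i) (z i)))"
        unfolding LL_def by (subst prod_ennreal) (auto intro: less_imp_le rr_pos)
      then show "ennreal (LL I v z) * indicator (PiE I A) z = (\<Prod>i\<in>I. ennreal (rr (v i) (z i)) * indicator (A i) (z i))"
        using z I by (simp add: indicator_PiE_prod space_NN prod.distrib)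
    qed
    also have "\<dots> = (\<Prod>i\<in>I. \<integral>\<^sup>+t. ennreal (rr (v i) t) * indicator (A i) t \<partial>std_normal_distribution)"
      unfolding NN_def using A I
      by (subst Q.product_nn_integral_prod) (auto simp: rr_def)
    also have "\<dots> = (\<Prod>i\<in>I. emeasure (Mv v i) (A i))"
    proof (intro prod.cong refl)
      fix i assume i: "i \<in> I"
      have "(\<integral>\<^sup>+t. ennreal (rr (v i) t) * indicator (A i) t \<partial>std_normal_distribution)
          = (\<integral>\<^sup>+t. ennreal (std_normal_density t) * (ennreal (rr (v i) t) * indicator (A i) t) \<partial>lborel)"
        using A i by (subst nn_integral_density) (auto simp: rr_def)
      also have "\<dots> = (\<integral>\<^sup>+t. ennreal (normal_density (v i) 1 t) * indicator (A i) t \<partial>lborel)"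
        proof (intro nn_integral_cong)
        fix t
        have "ennreal (std_normal_density t) * ennreal (rr (v i) t) = ennreal (normal_density (v i) 1 t)"
          by (subst ennreal_mult[symmetric]) (auto simp: std_mult_rr intro: less_imp_le rr_pos)
        then show "ennreal (std_normal_density t) * (ennreal (rr (v i) t) * indicator (A i) t) = ennreal (normal_density (v i) 1 t) * indicator (A i) t"
          by (simp add: mult.assoc[symmetric])
      qed
      also have "\<dots> = emeasure (Mv v i) (A i)"
        using A i by (simp add: Mv_def emeasure_density mult.commute)
      finally show "(\<integral>\<^sup>+t. ennreal (rr (v i) t) * indicator (A i) t \<partial>std_normal_distribution) = emeasure (Mv v i) (A i)" .
    qed
    finally show "emeasure (density (NN I) (\<lambda>z. ennreal (LL I v z))) (PiE I A) = (\<Prod>i\<in>I. emeasure (Mv v i) (A i))" .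
  qed
qed

lemma nn_normal_density: "(\<integral>\<^sup>+x. ennreal (normal_density \<mu> 1 x) \<partial>lborel) = 1"
  by (subst nn_integral_eq_integral) auto

lemma rr_sq_1d: "(\<integral>\<^sup>+t. ennreal ((rr a t)\<^sup>2) \<partial>std_normal_distribution) = ennreal (exp (a\<^sup>2))"
proof -
  have "(\<integral>\<^sup>+t. ennreal ((rr a t)\<^sup>2) \<partial>std_normal_distribution)
      = (\<integral>\<^sup>+t. ennreal (std_normal_density t) * ennreal ((rr a t)\<^sup>2) \<partial>lborel)"
    by (subst nn_integral_density) (auto simp: rr_def)
  also have "\<dots> = (\<integral>\<^sup>+t. ennreal (exp (a\<^sup>2)) * ennreal (normal_density (2*a) 1 t) \<partial>lborel)"
  proof (intro nn_integral_cong)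
    fix t
    have e: "- t\<^sup>2 / 2 + ((a*t - a^2/2) + (a*t - a^2/2)) = a\<^sup>2 + (-(t - 2*a)\<^sup>2 / 2)"
      by (simp add: power2_diff field_simps)
    have "exp (- t\<^sup>2 / 2) * (exp (a*t - a^2/2))\<^sup>2 = exp (a\<^sup>2) * exp (-(t - 2*a)\<^sup>2 / 2)"
    proof -
      have "exp (- t\<^sup>2 / 2) * (exp (a*t - a^2/2))\<^sup>2 = exp (- t\<^sup>2 / 2 + ((a*t - a^2/2) + (a*t - a^2/2)))"
        by (simp only: power2_eq_square[of "exp _"] exp_add)
      also have "\<dots> = exp (a\<^sup>2 + (-(t - 2*a)\<^sup>2 / 2))" by (simp only: e)
      also have "\<dots> = exp (a\<^sup>2) * exp (-(t - 2*a)\<^sup>2 / 2)" by (simp only: exp_add)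
      finally show ?thesis .
    qed
    then have "std_normal_density t * (rr a t)\<^sup>2 = exp (a\<^sup>2) * normal_density (2*a) 1 t"
      unfolding normal_density_def rr_def by simp
    then show "ennreal (std_normal_density t) * ennreal ((rr a t)\<^sup>2) = ennreal (exp (a\<^sup>2)) * ennreal (normal_density (2*a) 1 t)"
      by (simp add: ennreal_mult[symmetric])
  qed
  also have "\<dots> = ennreal (exp (a\<^sup>2))"
    by (subst nn_integral_cmult) (auto simp: nn_normal_density)
  finally show ?thesis .
qed

context
  fixes I :: "nat set" and v :: "nat \<Rightarrow> real"
  assumes I: "finite I"
begin

interpretation M: prob_space "NN I" by (rule prob_NN)

lemma LL_nn: "(\<integral>\<^sup>+z. ennreal (LL I v z) \<partial>NN I) = 1"
proof -
  interpret P: product_prob_space "Mv v" by (rule pps_Mv)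
  have "(\<integral>\<^sup>+z. ennreal (LL I v z) \<partial>NN I) = emeasure (density (NN I) (\<lambda>z. ennreal (LL I v z))) (space (NN I))"
    by (subst emeasure_density) (auto intro!: nn_integral_cong)
  also have "\<dots> = emeasure (PiM I (Mv v)) (space (PiM I (Mv v)))"
    by (simp add: density_LL[OF I] space_NN space_PiM)
  also have "\<dots> = 1" using P.prob_space_axioms by (simp add: prob_space.emeasure_space_1 P.emeasure_space_1)
  finally show ?thesis .
qed

lemma LL_int: "integrable (NN I) (LL I v)" and LL_integral: "(\<integral>z. LL I v z \<partial>NN I) = 1"
proof -
  show "integrable (NN I) (LL I v)"
    by (rule integrableI_nn_integral_finite[of _ _ 1]) (auto simp: LL_nn less_imp_le[OF LL_pos])
  then show "(\<integral>z. LL I v z \<partial>NN I) = 1"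
    using LL_nn by (subst (asm) nn_integral_eq_integral) (auto simp: less_imp_le[OF LL_pos])
qed

lemma LL_sq_nn: "(\<integral>\<^sup>+z. ennreal ((LL I v z)\<^sup>2) \<partial>NN I) = ennreal (exp (\<Sum>i\<in>I. (v i)\<^sup>2))"
proof -
  interpret Q: product_prob_space "\<lambda>_::nat. std_normal_distribution" by (rule pps_N1)
  have "(\<integral>\<^sup>+z. ennreal ((LL I v z)\<^sup>2) \<partial>NN I) = (\<integral>\<^sup>+z. (\<Prod>i\<in>I. ennreal ((rr (v i) (z i))\<^sup>2)) \<partial>NN I)"
    unfolding LL_def by (intro nn_integral_cong) (auto simp: prod_ennreal power_mult_distrib prod_power_distrib)
  also have "\<dots> = (\<Prod>i\<in>I. \<integral>\<^sup>+t. ennreal ((rr (v i) t)\<^sup>2) \<partial>std_normal_distribution)"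
    unfolding NN_def using I by (subst Q.product_nn_integral_prod) (auto simp: rr_def)
  also have "\<dots> = (\<Prod>i\<in>I. ennreal (exp ((v i)\<^sup>2)))" by (simp add: rr_sq_1d)
  also have "\<dots> = ennreal (exp (\<Sum>i\<in>I. (v i)\<^sup>2))"
    using I by (simp add: prod_ennreal exp_sum)
  finally show ?thesis .
qed

lemma LL_sq_int: "integrable (NN I) (\<lambda>z. (LL I v z)\<^sup>2)" 
  and LL_sq_integral: "(\<integral>z. (LL I v z)\<^sup>2 \<partial>NN I) = exp (\<Sum>i\<in>I. (v i)\<^sup>2)"
proof -
  show "integrable (NN I) (\<lambda>z. (LL I v z)\<^sup>2)"
    by (rule integrableI_nn_integral_finite[OF _ _ LL_sq_nn]) auto
  then show "(\<integral>z. (LL I v z)\<^sup>2 \<partial>NN I) = exp (\<Sum>i\<in>I. (v i)\<^sup>2)"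
    using LL_sq_nn by (subst (asm) nn_integral_eq_integral) auto
qed

lemma abs_LL_bound: "(\<integral>z. \<bar>LL I v z - 1\<bar> \<partial>NN I) \<le> sqrt (exp (\<Sum>i\<in>I. (v i)\<^sup>2) - 1)"
proof -
  define X where "X = (\<lambda>z. \<bar>LL I v z - 1\<bar>)"
  have iX: "integrable (NN I) X" unfolding X_def using LL_int by auto
  have X2: "(\<lambda>z. (X z)\<^sup>2) = (\<lambda>z. (LL I v z)\<^sup>2 - 2 * LL I v z + 1)"
    unfolding X_def by (auto simp: power2_eq_square algebra_simps)
  have iX2: "integrable (NN I) (\<lambda>z. (X z)\<^sup>2)" unfolding X2 using LL_int LL_sq_int by auto
  have EX2: "(\<integral>z. (X z)\<^sup>2 \<partial>NN I) = exp (\<Sum>i\<in>I. (v i)\<^sup>2) - 1"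
    unfolding X2 using LL_int LL_sq_int LL_integral LL_sq_integral
    by (simp add: M.prob_space)
  have "0 \<le> M.variance X" by (rule M.variance_positive)
  then have "(\<integral>z. X z \<partial>NN I)\<^sup>2 \<le> exp (\<Sum>i\<in>I. (v i)\<^sup>2) - 1"
    using M.variance_eq[OF iX iX2] EX2 by simp
  moreover have "0 \<le> (\<integral>z. X z \<partial>NN I)" unfolding X_def by auto
  ultimately show ?thesis unfolding X_def[symmetric] by (simp add: real_le_rsqrt)
qed

end

lemma std_gauss_NN: "std_gauss d = NN {..<d}"
  by (simp add: std_gauss_def NN_def)

lemma gauss_exp_diff:
  fixes h :: "(nat \<Rightarrow> real) \<Rightarrow> real"
  assumes s: "\<sigma> > 0" and x: "x \<in> Rd d" and x': "x' \<in> Rd d"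
    and hm: "(\<lambda>z. h (ext d z)) \<in> borel_measurable (PiM {..<d} (\<lambda>_. borel))"
    and hb: "\<forall>p\<in>Rd d. \<bar>h p\<bar> \<le> 1"
  shows "\<bar>gauss_exp d \<sigma> h x - gauss_exp d \<sigma> h x'\<bar> \<le> sqrt (exp ((l2dist d x x' / \<sigma>)\<^sup>2) - 1)"
proof -
  define I where "I = {..<d}"
  have I: "finite I" by (simp add: I_def)
  interpret M: prob_space "NN I" by (rule prob_NN)
  define v where "v i = (x i - x' i) / \<sigma>" for i
  define g where "g z = h (ext d (\<lambda>i\<in>I. x' i + \<sigma> * z i))" for z
  define L where "L = LL I v"
  have gm: "g \<in> borel_measurable (PiM I (\<lambda>_. borel))"
  proof -
    have "(\<lambda>z. \<lambda>i\<in>I. x' i + \<sigma> * z i) \<in> measurable (PiM I (\<lambda>_. borel)) (PiM I (\<lambda>_. borel))"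
      by (intro measurable_restrict) measurable
    from measurable_comp[OF this hm[folded I_def]] show ?thesis
      unfolding g_def o_def .
  qed
  have gmN: "g \<in> borel_measurable (NN I)"
    using gm by (subst measurable_cong_sets[OF sets_NN refl])
  have ext_in: "ext d w \<in> Rd d" for w by (simp add: ext_def Rd_def)
  have gb: "\<bar>g z\<bar> \<le> 1" for z unfolding g_def using hb ext_in by blast
  have e1: "gauss_exp d \<sigma> h x = (\<integral>z. g (sh I v z) \<partial>NN I)"
    unfolding gauss_exp_def std_gauss_NN I_def[symmetric]
  proof (rule Bochner_Integration.integral_cong[OF refl])
    fix z assume "z \<in> space (NN I)"
    have "shift x \<sigma> (ext d z) = ext d (\<lambda>i\<in>I. x' i + \<sigma> * sh I v z i)"
      using x s by (auto simp: shift_def ext_def sh_def v_def I_def Rd_def fun_eq_iff field_simps)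
    then show "h (shift x \<sigma> (ext d z)) = g (sh I v z)" by (simp add: g_def)
  qed
  have e2: "gauss_exp d \<sigma> h x' = (\<integral>z. g z \<partial>NN I)"
    unfolding gauss_exp_def std_gauss_NN I_def[symmetric]
  proof (rule Bochner_Integration.integral_cong[OF refl])
    fix z assume "z \<in> space (NN I)"
    have "shift x' \<sigma> (ext d z) = ext d (\<lambda>i\<in>I. x' i + \<sigma> * z i)"
      using x' s by (auto simp: shift_def ext_def I_def Rd_def fun_eq_iff)
    then show "h (shift x' \<sigma> (ext d z)) = g z" by (simp add: g_def)
  qed
  have "(\<integral>z. g (sh I v z) \<partial>NN I) = (\<integral>z. g z \<partial>distr (NN I) (PiM I (Mv v)) (sh I v))"
    using gm by (subst integral_distr[OF sh_meas]) (auto simp: measurable_cong_sets[OF sets_PiM_Mv refl])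
  also have "\<dots> = (\<integral>z. g z \<partial>density (NN I) (\<lambda>z. ennreal (L z)))"
    by (simp add: distr_sh[OF I] density_LL[OF I] L_def)
  also have "\<dots> = (\<integral>z. L z * g z \<partial>NN I)"
    using gmN by (subst integral_density) (auto simp: L_def less_imp_le[OF LL_pos])
  finally have e3: "gauss_exp d \<sigma> h x = (\<integral>z. L z * g z \<partial>NN I)" using e1 by simp
  have ig: "integrable (NN I) g"
    using gmN gb by (intro M.integrable_const_bound[of _ 1]) auto
  have iLg: "integrable (NN I) (\<lambda>z. L z * g z)"
  proof (rule Bochner_Integration.integrable_bound[OF LL_int[OF I, of v]])
    show "(\<lambda>z. L z * g z) \<in> borel_measurable (NN I)" using gmN unfolding L_def by measurable
    show "AE z in NN I. norm (L z * g z) \<le> norm (LL I v z)"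
      using gb LL_pos[of I v] unfolding L_def
      by (auto intro!: AE_I2 simp: abs_mult intro: mult_left_le)
  qed
  have iL1: "integrable (NN I) (\<lambda>z. \<bar>L z - 1\<bar>)" using LL_int[OF I, of v] unfolding L_def by auto
  have "gauss_exp d \<sigma> h x - gauss_exp d \<sigma> h x' = (\<integral>z. (L z - 1) * g z \<partial>NN I)"
    using e3 e2 iLg ig by (simp add: left_diff_distrib)
  then have "\<bar>gauss_exp d \<sigma> h x - gauss_exp d \<sigma> h x'\<bar> \<le> (\<integral>z. \<bar>(L z - 1) * g z\<bar> \<partial>NN I)"
    using integral_norm_bound[of "NN I" "\<lambda>z. (L z - 1) * g z"] by simp
  also have "\<dots> \<le> (\<integral>z. \<bar>L z - 1\<bar> \<partial>NN I)"
  proof (rule integral_mono)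
    show "integrable (NN I) (\<lambda>z. \<bar>(L z - 1) * g z\<bar>)"
      using iLg ig by (auto simp: left_diff_distrib)
    show "integrable (NN I) (\<lambda>z. \<bar>L z - 1\<bar>)" by (rule iL1)
    fix z show "\<bar>(L z - 1) * g z\<bar> \<le> \<bar>L z - 1\<bar>"
      using gb[of z] by (auto simp: abs_mult intro: mult_left_le)
  qed
  also have "\<dots> \<le> sqrt (exp (\<Sum>i\<in>I. (v i)\<^sup>2) - 1)"
    unfolding L_def by (rule abs_LL_bound[OF I])
  also have "(\<Sum>i\<in>I. (v i)\<^sup>2) = (l2dist d x x' / \<sigma>)\<^sup>2"
    unfolding l2dist_def l2norm_def v_def I_def
    by (simp add: power_divide sum_divide_distrib[symmetric] sum_nonneg)
  finally show ?thesis .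
qed

lemma shift_ext_eq: "x \<in> Rd d \<Longrightarrow> shift x \<sigma> (ext d z) = ext d (\<lambda>i\<in>{..<d}. x i + \<sigma> * z i)"
  by (auto simp: shift_def ext_def Rd_def fun_eq_iff)

lemma meas_shift:
  assumes x: "x \<in> Rd d" and hm: "(\<lambda>z. h (ext d z)) \<in> borel_measurable (PiM {..<d} (\<lambda>_. borel))"
  shows "(\<lambda>z. h (shift x \<sigma> (ext d z))) \<in> borel_measurable (std_gauss d)"
proof -
  have "(\<lambda>z. \<lambda>i\<in>{..<d}. x i + \<sigma> * z i) \<in> measurable (PiM {..<d} (\<lambda>_. borel)) (PiM {..<d} (\<lambda>_. borel))"
    by (intro measurable_restrict) measurable
  from measurable_comp[OF this hm] have "(\<lambda>z. h (shift x \<sigma> (ext d z))) \<in> borel_measurable (PiM {..<d} (\<lambda>_. borel))"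
    by (simp add: o_def shift_ext_eq[OF x])
  then show ?thesis unfolding std_gauss_NN by (subst measurable_cong_sets[OF sets_NN refl])
qed

lemma gauss_exp_prob:
  assumes x: "x \<in> Rd d" and hm: "(\<lambda>z. h (ext d z)) \<in> borel_measurable (PiM {..<d} (\<lambda>_. borel))"
    and hv: "\<forall>p\<in>Rd d. h p \<in> {-1, 1}" and y: "y \<in> {-1, 1}"
  shows "y * gauss_exp d \<sigma> h x = 2 * gauss_prob d \<sigma> h x y - 1"
proof -
  interpret M: prob_space "std_gauss d" unfolding std_gauss_NN by (rule prob_NN)
  define f where "f z = h (shift x \<sigma> (ext d z))" for z
  have fm: "f \<in> borel_measurable (std_gauss d)" unfolding f_def by (rule meas_shift[OF x hm])
  have fv: "f z \<in> {-1, 1}" for z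
  proof -
    have "shift x \<sigma> (ext d z) \<in> Rd d" using x by (auto simp: shift_def Rd_def ext_def)
    then show ?thesis using hv unfolding f_def by blast
  qed
  define A where "A = {z \<in> space (std_gauss d). f z = 1}"
  have Am: "A \<in> sets (std_gauss d)" unfolding A_def using fm by measurable
  have "gauss_exp d \<sigma> h x = (\<integral>z. 2 * indicator A z - 1 \<partial>std_gauss d)"
    unfolding gauss_exp_def f_def[symmetric]
  proof (rule Bochner_Integration.integral_cong[OF refl])
    fix z assume "z \<in> space (std_gauss d)"
    then show "f z = 2 * indicator A z - 1" using fv[of z] by (auto simp: A_def indicator_def)
  qed
  also have "\<dots> = 2 * M.prob A - 1"
  proof -
    have iA: "integrable (std_gauss d) (indicator A :: _ \<Rightarrow> real)"
      using Am by (intro integrable_real_indicator) (auto simp: M.emeasure_eq_measure)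
    then show ?thesis using Am
      by (simp add: Bochner_Integration.integral_diff M.prob_space)
  qed
  finally have E: "gauss_exp d \<sigma> h x = 2 * M.prob A - 1" .
  have P1: "gauss_prob d \<sigma> h x 1 = M.prob A" unfolding gauss_prob_def A_def f_def ..
  have "{z \<in> space (std_gauss d). f z = -1} = space (std_gauss d) - A"
    using fv by (auto simp: A_def)
  then have P2: "gauss_prob d \<sigma> h x (-1) = 1 - M.prob A"
    unfolding gauss_prob_def f_def[symmetric] using Am by (simp add: M.prob_compl)
  show ?thesis using y E P1 P2 by auto
qed

lemma exp_small: fixes y :: real assumes "0 \<le> y" "y \<le> 1/2" shows "exp y - 1 \<le> 2 * y"
proof -
  have "1 - y \<le> exp (-y)" using exp_ge_add_one_self[of "-y"] by simp
  then have "exp y * (1 - y) \<le> 1" by (simp add: exp_minus field_simps)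
  then have "exp y \<le> 1 + y * exp y" by (simp add: algebra_simps)
  moreover have "exp y \<le> 2"
  proof -
    have "exp y \<le> 1 / (1 - y)" using \<open>exp y * (1 - y) \<le> 1\<close> assms by (simp add: field_simps)
    also have "\<dots> \<le> 2" using assms by (simp add: field_simps)
    finally show ?thesis .
  qed
  ultimately have "exp y \<le> 1 + y * 2" using mult_left_mono[of "exp y" 2 y] assms
    by linarith
  then show ?thesis by simp
qed

lemma gamma_eq: "alg2_gamma \<sigma> \<epsilon> = sqrt (pi / 32) * \<sigma> * \<epsilon>"
proof -
  have a: "(pi/32) * (2/pi) = (1/4)\<^sup>2" by (simp add: power2_eq_square)
  have "sqrt (pi/32) * sqrt (2/pi) = 1/4"
    by (simp only: real_sqrt_mult[symmetric] a real_sqrt_abs)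
  moreover have "sqrt (2/pi) > 0" by simp
  ultimately have "sqrt (pi/32) = (1/4) / sqrt (2/pi)" by (simp add: field_simps)
  then show ?thesis unfolding alg2_gamma_def alg2_eps_def by (simp add: field_simps)
qed

lemma near_bound:
  assumes s: "\<sigma> > 0" and e: "0 < \<epsilon>" "\<epsilon> \<le> 1" and dl: "l2dist d x x' \<le> alg2_gamma \<sigma> \<epsilon>"
  shows "sqrt (exp ((l2dist d x x' / \<sigma>)\<^sup>2) - 1) \<le> \<epsilon> / 2"
proof -
  have ge: "0 \<le> l2dist d x x'" by (simp add: l2dist_def l2norm_def sum_nonneg)
  have "l2dist d x x' / \<sigma> \<le> alg2_gamma \<sigma> \<epsilon> / \<sigma>" using dl s by (simp add: divide_right_mono)
  also have "\<dots> = \<epsilon> * sqrt (pi/32)" using s by (simp add: gamma_eq)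
  finally have "(l2dist d x x' / \<sigma>)\<^sup>2 \<le> (\<epsilon> * sqrt (pi/32))\<^sup>2"
    using ge s by (intro power_mono) auto
  also have "\<dots> = \<epsilon>\<^sup>2 * (pi/32)" by (simp add: power_mult_distrib)
  finally have q: "(l2dist d x x' / \<sigma>)\<^sup>2 \<le> \<epsilon>\<^sup>2 * (pi/32)" .
  have e2: "\<epsilon>\<^sup>2 \<le> 1" using e by (simp add: power_le_one)
  have "\<epsilon>\<^sup>2 * (pi/32) \<le> 1 * (pi/32)" using e2 by (intro mult_right_mono) auto
  then have "\<epsilon>\<^sup>2 * (pi/32) \<le> 1/2" using pi_less_4 by linarith
  then have h12: "(l2dist d x x' / \<sigma>)\<^sup>2 \<le> 1/2" using q by linarith
  have "exp ((l2dist d x x' / \<sigma>)\<^sup>2) - 1 \<le> 2 * (l2dist d x x' / \<sigma>)\<^sup>2"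
    by (rule exp_small[OF zero_le_power2 h12])
  also have "\<dots> \<le> 2 * (\<epsilon>\<^sup>2 * (pi/32))" using q by linarith
  also have "\<dots> \<le> (\<epsilon>/2)\<^sup>2" using pi_less_4 mult_right_mono[of pi 4 "\<epsilon>\<^sup>2"] by (simp add: power_divide field_simps)
  finally have "exp ((l2dist d x x' / \<sigma>)\<^sup>2) - 1 \<le> (\<epsilon>/2)\<^sup>2" .
  then have "sqrt (exp ((l2dist d x x' / \<sigma>)\<^sup>2) - 1) \<le> sqrt ((\<epsilon>/2)\<^sup>2)" by (rule real_sqrt_le_mono)
  then show ?thesis using e by simp
qed

lemma hedge_closed:
  assumes G: "finite G" "G \<noteq> {}"
  shows "hedge G \<eta> L t g = exp (-\<eta> * (\<Sum>s<t. L s g)) / (\<Sum>g'\<in>G. exp (-\<eta> * (\<Sum>s<t. L s g')))"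
proof (induction t arbitrary: g)
  case 0
  then show ?case using G by simp
next
  case (Suc t)
  define W where "W g = exp (-\<eta> * (\<Sum>s<t. L s g))" for g
  define S where "S = (\<Sum>g'\<in>G. W g')"
  have Spos: "S > 0" unfolding S_def W_def using G by (intro sum_pos) auto
  have W': "exp (-\<eta> * (\<Sum>s<Suc t. L s g)) = W g * exp (- \<eta> * L t g)" for g
    by (simp add: W_def exp_add[symmetric] algebra_simps)
  have "hedge G \<eta> L (Suc t) g = (W g / S * exp (- \<eta> * L t g)) / (\<Sum>g'\<in>G. W g' / S * exp (- \<eta> * L t g'))"
    by (simp add: Suc.IH W_def S_def)
  also have "(\<Sum>g'\<in>G. W g' / S * exp (- \<eta> * L t g')) = (\<Sum>g'\<in>G. W g' * exp (- \<eta> * L t g')) / S"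
    by (simp add: sum_divide_distrib)
  also have "(W g / S * exp (- \<eta> * L t g)) / ((\<Sum>g'\<in>G. W g' * exp (- \<eta> * L t g')) / S)
      = (W g * exp (- \<eta> * L t g)) / (\<Sum>g'\<in>G. W g' * exp (- \<eta> * L t g'))"
    using Spos by (simp add: field_simps)
  finally show ?case by (simp only: W'[symmetric])
qed

lemma hoeff_bern:
  fixes q \<eta> :: real
  assumes "0 \<le> q" "q \<le> 1" "0 \<le> \<eta>"
  shows "ln (1 - q + q * exp (-\<eta>)) \<le> -\<eta> * q + \<eta>\<^sup>2 / 8"
proof -
  have A: "-\<eta> * (1 - q) + ln (1 + (1 - q) * (exp \<eta> - 1)) \<le> \<eta>\<^sup>2 / 8"
    using Hoeffdings_lemma_aux[of \<eta> "1 - q"] assms by simp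
  have pos: "1 + (1 - q) * (exp \<eta> - 1) > 0"
    using assms by (intro add_pos_nonneg mult_nonneg_nonneg) auto
  have "1 - q + q * exp (-\<eta>) = exp (-\<eta>) * (1 + (1 - q) * (exp \<eta> - 1))"
    by (simp add: algebra_simps exp_minus field_simps)
  then have "ln (1 - q + q * exp (-\<eta>)) = -\<eta> + ln (1 + (1 - q) * (exp \<eta> - 1))"
    using pos by (simp add: ln_mult)
  then show ?thesis using A by (simp add: algebra_simps)
qed

lemma hedge_regret:
  fixes G :: "'g set" and L :: "nat \<Rightarrow> 'g \<Rightarrow> real"
  assumes G: "finite G" "G \<noteq> {}" and L01: "\<And>t g. L t g \<in> {0, 1}" and g0: "g0 \<in> G"
    and T: "T > 0" and eta: "\<eta> = sqrt (8 * ln (real (card G)) / real T)"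
  shows "(\<Sum>t<T. \<Sum>g\<in>G. hedge G \<eta> L t g * L t g) \<le> (\<Sum>t<T. L t g0) + sqrt (real T * ln (real (card G)) / 2)"
proof -
  define Lam where "Lam t g = (\<Sum>s<t. L s g)" for t g
  define W where "W t g = exp (-\<eta> * Lam t g)" for t g
  define Phi where "Phi t = ln (\<Sum>g\<in>G. W t g)" for t
  define q where "q t = (\<Sum>g\<in>G. hedge G \<eta> L t g * L t g)" for t
  have cG: "card G \<ge> 1" using G by (simp add: Suc_le_eq card_gt_0_iff)
  have eta0: "\<eta> \<ge> 0" unfolding eta using cG by simp
  have Wpos: "W t g > 0" for t g by (simp add: W_def)
  have Spos: "(\<Sum>g\<in>G. W t g) > 0" for t using G Wpos by (intro sum_pos) auto
  have P: "hedge G \<eta> L t g = W t g / (\<Sum>g\<in>G. W t g)" for t g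
    using hedge_closed[OF G] by (simp add: W_def Lam_def)
  have Pnn: "hedge G \<eta> L t g \<ge> 0" for t g using P Wpos Spos by (simp add: less_imp_le)
  have Psum: "(\<Sum>g\<in>G. hedge G \<eta> L t g) = 1" for t
    using Spos[of t] by (simp add: P sum_divide_distrib[symmetric])
  have q01: "0 \<le> q t \<and> q t \<le> 1" for t
  proof -
    have Lnn: "0 \<le> L t g" for g using L01[of t g] by auto
    have "q t \<le> (\<Sum>g\<in>G. hedge G \<eta> L t g)"
      unfolding q_def
    proof (intro sum_mono)
      fix g show "hedge G \<eta> L t g * L t g \<le> hedge G \<eta> L t g"
        using L01[of t g] Pnn[of t g] by auto
    qed
    moreover have "0 \<le> q t" unfolding q_def by (intro sum_nonneg mult_nonneg_nonneg Pnn Lnn)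
    ultimately show ?thesis using Psum by simp
  qed
  have step: "Phi (Suc t) - Phi t \<le> -\<eta> * q t + \<eta>\<^sup>2 / 8" for t
  proof -
    have e: "exp (-\<eta> * L t g) = 1 - L t g + L t g * exp (-\<eta>)" for g
      using L01[of t g] by auto
    have "(\<Sum>g\<in>G. W (Suc t) g) = (\<Sum>g\<in>G. W t g * exp (-\<eta> * L t g))"
      by (simp add: W_def Lam_def exp_add[symmetric] algebra_simps)
    also have "\<dots> = (\<Sum>g\<in>G. W t g) * (\<Sum>g\<in>G. hedge G \<eta> L t g * exp (-\<eta> * L t g))"
      using Spos[of t] by (simp add: P sum_distrib_left)
    also have "(\<Sum>g\<in>G. hedge G \<eta> L t g * exp (-\<eta> * L t g)) = 1 - q t + q t * exp (-\<eta>)"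
      unfolding e q_def using Psum[of t]
      by (simp add: algebra_simps sum.distrib sum_subtractf sum_distrib_left)
    finally have eqS: "(\<Sum>g\<in>G. W (Suc t) g) = (\<Sum>g\<in>G. W t g) * (1 - q t + q t * exp (-\<eta>))" .
    have pos2: "1 - q t + q t * exp (-\<eta>) > 0"
    proof (cases "q t = 1")
      case True then show ?thesis by simp
    next
      case False then show ?thesis using q01[of t] by (smt (verit) exp_gt_zero mult_nonneg_nonneg)
    qed
    have "Phi (Suc t) = Phi t + ln (1 - q t + q t * exp (-\<eta>))"
      unfolding Phi_def eqS using Spos[of t] pos2 by (simp add: ln_mult)
    then show ?thesis using hoeff_bern[of "q t" \<eta>] q01[of t] eta0 by simp
  qed
  have tele: "Phi T - Phi 0 \<le> -\<eta> * (\<Sum>t<T. q t) + real T * \<eta>\<^sup>2 / 8"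
  proof (induction T)
    case 0 then show ?case by simp
  next
    case (Suc n) then show ?case using step[of n] by (simp add: algebra_simps)
  qed
  have Phi0: "Phi 0 = ln (real (card G))" by (simp add: Phi_def W_def Lam_def)
  have PhiT: "Phi T \<ge> -\<eta> * Lam T g0"
  proof -
    have "W T g0 \<le> (\<Sum>g\<in>G. W T g)"
      using G g0 Wpos by (intro member_le_sum) (auto intro: less_imp_le)
    then have "ln (W T g0) \<le> Phi T" unfolding Phi_def using Wpos[of T g0] by (subst ln_le_cancel_iff) auto
    then show ?thesis by (simp add: W_def)
  qed
  have main: "\<eta> * (\<Sum>t<T. q t) \<le> \<eta> * Lam T g0 + ln (real (card G)) + real T * \<eta>\<^sup>2 / 8"
    using tele Phi0 PhiT by simp
  show ?thesis
  proof (cases "card G = 1")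
    case True
    then obtain a where "G = {a}" by (auto simp: card_1_singleton_iff)
    with g0 have Ga: "G = {g0}" by simp
    have "q t = L t g0" for t using Psum[of t] by (simp add: q_def Ga)
    then show ?thesis by (simp add: q_def[symmetric] True)
  next
    case False
    then have "card G > 1" using G by (simp add: Suc_lessI card_gt_0_iff)
    then have lnpos: "ln (real (card G)) > 0" by simp
    then have etapos: "\<eta> > 0" unfolding eta using T by simp
    have "(\<Sum>t<T. q t) \<le> Lam T g0 + (ln (real (card G)) / \<eta> + real T * \<eta> / 8)"
      using main etapos by (simp add: field_simps power2_eq_square)
    also have "ln (real (card G)) / \<eta> + real T * \<eta> / 8 = sqrt (real T * ln (real (card G)) / 2)"
    proof -
      define l where "l = ln (real (card G))"
      have "\<eta>\<^sup>2 = 8 * l / real T" unfolding eta l_def using lnpos T by simp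
      then have "\<eta> * \<eta> = 8 * l / real T" by (simp add: power2_eq_square)
      have s2: "(sqrt (real T * l / 2))\<^sup>2 = real T * l / 2" using lnpos l_def by simp
      have "l / \<eta> + real T * \<eta> / 8 = (8 * l + real T * \<eta> * \<eta>) / (8 * \<eta>)"
        using etapos by (simp add: field_simps)
      also have "\<dots> = 2 * l / \<eta>" using \<open>\<eta> * \<eta> = 8 * l / real T\<close> T etapos by (simp add: field_simps)
      also have "\<dots> = sqrt (real T * l / 2)"
      proof -
        have "(2 * l / \<eta>)\<^sup>2 = real T * l / 2"
          using \<open>\<eta>\<^sup>2 = 8 * l / real T\<close> etapos lnpos T l_def
          by (simp add: power_divide field_simps power2_eq_square)
        moreover have "2 * l / \<eta> \<ge> 0" using etapos lnpos l_def by simp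
        ultimately show ?thesis by (metis real_sqrt_unique)
      qed
      finally show ?thesis unfolding l_def .
    qed
    finally show ?thesis by (simp add: q_def Lam_def)
  qed
qed

definition shat :: "'a set set \<Rightarrow> 'a set \<Rightarrow> bool" where
  "shat C A \<longleftrightarrow> (\<forall>B\<subseteq>A. \<exists>c\<in>C. c \<inter> A = B)"

lemma pajor:
  assumes "finite S" "C \<subseteq> Pow S"
  shows "card C \<le> card {A. A \<subseteq> S \<and> shat C A}"
  using assms
proof (induction S arbitrary: C rule: finite_induct)
  case empty
  then have "C \<subseteq> {{}}" by auto
  then show ?case
  proof (cases "C = {}")
    case True then show ?thesis by simp
  next
    case False
    with \<open>C \<subseteq> {{}}\<close> have "C = {{}}" by auto
    then have "{A. A \<subseteq> {} \<and> shat C A} = {{}}" by (auto simp: shat_def)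
    then show ?thesis using \<open>C = {{}}\<close> by simp
  qed
next
  case (insert p S)
  define C0 where "C0 = {c\<in>C. p \<notin> c}"
  define Cp where "Cp = {c\<in>C. p \<in> c}"
  define C1 where "C1 = (\<lambda>c. c - {p}) ` Cp"
  have finC: "finite C" using insert.prems insert.hyps(1) by (meson finite_Pow_iff finite_insert rev_finite_subset)
  have C0S: "C0 \<subseteq> Pow S" using insert.prems by (auto simp: C0_def)
  have C1S: "C1 \<subseteq> Pow S" using insert.prems by (auto simp: C1_def Cp_def)
  have inj: "inj_on (\<lambda>c. c - {p}) Cp" unfolding Cp_def inj_on_def by blast
  have cardC: "card C = card C0 + card C1"
  proof -
    have "C = C0 \<union> Cp" "C0 \<inter> Cp = {}" by (auto simp: C0_def Cp_def)
    moreover have "finite C0" "finite Cp" using finC by (auto simp: C0_def Cp_def)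
    ultimately have "card C = card C0 + card Cp" by (metis card_Un_disjoint)
    also have "card Cp = card C1" unfolding C1_def using inj by (simp add: card_image)
    finally show ?thesis .
  qed
  define Sh0 where "Sh0 = {A. A \<subseteq> S \<and> shat C0 A}"
  define Sh1 where "Sh1 = {A. A \<subseteq> S \<and> shat C1 A}"
  have IH0: "card C0 \<le> card Sh0" using insert.IH[OF C0S] by (simp add: Sh0_def)
  have IH1: "card C1 \<le> card Sh1" using insert.IH[OF C1S] by (simp add: Sh1_def)
  have fin0: "finite Sh0" "finite Sh1" using insert.hyps(1) by (auto simp: Sh0_def Sh1_def)
  define F where "F = {A. A \<subseteq> insert p S \<and> shat C A}"
  have finF: "finite F" using insert.hyps(1) by (auto simp: F_def)
  have U: "Sh0 \<union> Sh1 \<subseteq> F"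
  proof
    fix A assume "A \<in> Sh0 \<union> Sh1"
    then consider "A \<in> Sh0" | "A \<in> Sh1" by blast
    then show "A \<in> F"
    proof cases
      case 1
      then have "A \<subseteq> S" "shat C0 A" by (simp_all add: Sh0_def)
      then show ?thesis unfolding F_def shat_def C0_def by blast
    next
      case 2
      then have A2: "A \<subseteq> S" "shat C1 A" by (simp_all add: Sh1_def)
      have pA: "p \<notin> A" using A2 insert.hyps(2) by auto
      have "shat C A" unfolding shat_def
      proof (intro allI impI)
        fix B assume "B \<subseteq> A"
        then obtain c' where "c' \<in> C1" "c' \<inter> A = B" using A2 unfolding shat_def by blast
        then obtain c where "c \<in> C" "c' = c - {p}" by (auto simp: C1_def Cp_def)
        then show "\<exists>c\<in>C. c \<inter> A = B" using \<open>c' \<inter> A = B\<close> pA by (intro bexI[of _ c]) auto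
      qed
      then show ?thesis using A2 by (auto simp: F_def)
    qed
  qed
  have I: "insert p ` (Sh0 \<inter> Sh1) \<subseteq> F"
  proof
    fix A' assume "A' \<in> insert p ` (Sh0 \<inter> Sh1)"
    then obtain A where A: "A' = insert p A" "A \<subseteq> S" "shat C0 A" "shat C1 A"
      by (auto simp: Sh0_def Sh1_def)
    have pA: "p \<notin> A" using A insert.hyps(2) by auto
    have "shat C (insert p A)" unfolding shat_def
    proof (intro allI impI)
      fix B assume B: "B \<subseteq> insert p A"
      show "\<exists>c\<in>C. c \<inter> insert p A = B"
      proof (cases "p \<in> B")
        case True
        have "B - {p} \<subseteq> A" using B by auto
        then obtain c' where "c' \<in> C1" "c' \<inter> A = B - {p}" using A(4) unfolding shat_def by blast
        then obtain c where "c \<in> C" "p \<in> c" "c' = c - {p}" by (auto simp: C1_def Cp_def)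
        then show ?thesis using \<open>c' \<inter> A = B - {p}\<close> True by (intro bexI[of _ c]) auto
      next
        case False
        then have "B \<subseteq> A" using B by auto
        then obtain c where "c \<in> C0" "c \<inter> A = B" using A(3) unfolding shat_def by blast
        then show ?thesis using False by (intro bexI[of _ c]) (auto simp: C0_def)
      qed
    qed
    then show "A' \<in> F" using A by (auto simp: F_def)
  qed
  have disj: "(Sh0 \<union> Sh1) \<inter> insert p ` (Sh0 \<inter> Sh1) = {}"
    using insert.hyps(2) by (auto simp: Sh0_def Sh1_def)
  have injI: "inj_on (insert p) (Sh0 \<inter> Sh1)"
    unfolding inj_on_def using insert.hyps(2) by (auto simp: Sh0_def)
  have "card C0 + card C1 \<le> card Sh0 + card Sh1" using IH0 IH1 by simp
  also have "\<dots> = card (Sh0 \<union> Sh1) + card (Sh0 \<inter> Sh1)" using fin0 by (rule card_Un_Int)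
  also have "card (Sh0 \<inter> Sh1) = card (insert p ` (Sh0 \<inter> Sh1))" using injI by (rule card_image[symmetric])
  also have "card (Sh0 \<union> Sh1) + card (insert p ` (Sh0 \<inter> Sh1)) = card ((Sh0 \<union> Sh1) \<union> insert p ` (Sh0 \<inter> Sh1))"
    by (rule card_Un_disjoint[symmetric]) (use fin0 disj in auto)
  also have "\<dots> \<le> card F" using U I finF by (intro card_mono) auto
  finally show ?case using cardC by (simp add: F_def)
qed

lemma card_small_subsets:
  assumes "finite S"
  shows "card {A. A \<subseteq> S \<and> card A \<le> k} \<le> (\<Sum>i\<le>k. card S choose i)"
proof -
  have "{A. A \<subseteq> S \<and> card A \<le> k} = (\<Union>i\<le>k. {A. A \<subseteq> S \<and> card A = i})" by auto
  then have "card {A. A \<subseteq> S \<and> card A \<le> k} \<le> (\<Sum>i\<le>k. card {A. A \<subseteq> S \<and> card A = i})"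
    by (simp add: card_UN_le)
  also have "\<dots> = (\<Sum>i\<le>k. card S choose i)" using assms by (simp add: n_subsets)
  finally show ?thesis .
qed

lemma binom_sum_bound:
  fixes r :: real
  assumes k: "k \<ge> 1" and rk: "real k \<le> r" and rn: "real n \<le> r"
  shows "real (\<Sum>i\<le>k. n choose i) \<le> (exp 1 * r / real k) ^ k"
proof -
  have rpos: "r > 0" using k rk by simp
  define x where "x = real k / r"
  have x0: "x > 0" and x1: "x \<le> 1" using rpos k rk by (auto simp: x_def)
  have "(\<Sum>i\<le>k. real (n choose i)) * x ^ k = (\<Sum>i\<le>k. real (n choose i) * x ^ k)"
    by (simp add: sum_distrib_right)
  also have "\<dots> \<le> (\<Sum>i\<le>k. real (n choose i) * x ^ i)"
    using x0 x1 by (intro sum_mono mult_left_mono power_decreasing) auto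
  also have "\<dots> \<le> (\<Sum>i\<le>k + n. real (n choose i) * x ^ i)"
    using x0 by (intro sum_mono2) auto
  also have "\<dots> = (\<Sum>i\<le>n. real (n choose i) * x ^ i)"
    by (rule sum.mono_neutral_right) auto
  also have "\<dots> = (x + 1) ^ n" by (simp add: binomial_ring)
  also have "\<dots> \<le> exp x ^ n"
    using x0 by (intro power_mono) (auto simp: add.commute exp_ge_add_one_self)
  also have "\<dots> = exp (real n * x)" by (simp add: exp_of_nat_mult)
  also have "\<dots> \<le> exp (real k)"
  proof -
    have "real n * x \<le> r * x" using rn x0 by (intro mult_right_mono) auto
    also have "\<dots> = real k" using rpos by (simp add: x_def)
    finally show ?thesis by simp
  qed
  finally have "(\<Sum>i\<le>k. real (n choose i)) \<le> exp (real k) / x ^ k"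
    using x0 by (simp add: field_simps)
  also have "\<dots> = (exp 1 * r / real k) ^ k"
    using x0 rpos k by (simp add: x_def power_divide power_mult_distrib exp_of_nat_mult[symmetric] field_simps)
  finally show ?thesis by simp
qed

lemma vc_upper:
  assumes fv: "finite_vc d H" and A: "finite A" "A \<subseteq> Rd d" "shatters H A"
  shows "card A \<le> vc_dim d H"
proof -
  from fv obtain n where n: "\<forall>A. finite A \<and> A \<subseteq> Rd d \<and> shatters H A \<longrightarrow> card A \<le> n"
    unfolding finite_vc_def by blast
  have "bdd_above {card A | A. finite A \<and> A \<subseteq> Rd d \<and> shatters H A}"
    using n by (intro bdd_aboveI[of _ n]) auto
  then show ?thesis unfolding vc_dim_def using A by (intro cSup_upper) auto
qed

lemma card_G_bound:
  fixes H :: "((nat \<Rightarrow> real) \<Rightarrow> real) set"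
  assumes S: "finite S" "S \<subseteq> Rd d" and hv: "\<forall>h\<in>H. \<forall>p\<in>Rd d. h p \<in> {-1, 1}"
    and fv: "finite_vc d H"
  shows "finite (restr_class H S) \<and> card (restr_class H S) \<le> card {A. A \<subseteq> S \<and> card A \<le> vc_dim d H}"
proof -
  define G where "G = restr_class H S"
  define tr where "tr f = {a \<in> S. f a = (1::real)}" for f :: "(nat \<Rightarrow> real) \<Rightarrow> real"
  have inj: "inj_on tr G"
  proof (rule inj_onI)
    fix f f' assume f: "f \<in> G" and f': "f' \<in> G" and eq: "tr f = tr f'"
    from f obtain h where h: "h \<in> H" "f = restrict h S" by (auto simp: G_def restr_class_def)
    from f' obtain h' where h': "h' \<in> H" "f' = restrict h' S" by (auto simp: G_def restr_class_def)
    show "f = f'"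
    proof
      fix a show "f a = f' a"
      proof (cases "a \<in> S")
        case True
        then have "a \<in> Rd d" using S by auto
        then have v: "h a \<in> {-1, 1}" "h' a \<in> {-1, 1}" using hv h h' by auto
        have "(a \<in> tr f) = (a \<in> tr f')" using eq by simp
        then have "(f a = 1) = (f' a = 1)" using True by (simp add: tr_def)
        then have "(h a = 1) = (h' a = 1)" using True h h' by simp
        then show ?thesis using v h h' True by auto
      next
        case False then show ?thesis using h h' by simp
      qed
    qed
  qed
  define C where "C = tr ` G"
  have CP: "C \<subseteq> Pow S" by (auto simp: C_def tr_def)
  then have finC: "finite C" using S by (meson finite_Pow_iff rev_finite_subset)
  have finG: "finite G" using finC inj by (simp add: C_def finite_image_iff)
  have "card G = card C" using inj by (simp add: C_def card_image)
  also have "\<dots> \<le> card {A. A \<subseteq> S \<and> shat C A}" by (rule pajor[OF S(1) CP])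
  also have "\<dots> \<le> card {A. A \<subseteq> S \<and> card A \<le> vc_dim d H}"
  proof (rule card_mono)
    show "finite {A. A \<subseteq> S \<and> card A \<le> vc_dim d H}" using S by simp
    show "{A. A \<subseteq> S \<and> shat C A} \<subseteq> {A. A \<subseteq> S \<and> card A \<le> vc_dim d H}"
    proof safe
      fix A assume AS: "A \<subseteq> S" and sh: "shat C A"
      have "shatters H A" unfolding shatters_def
      proof (intro allI impI)
        fix B assume "B \<subseteq> A"
        then obtain c where "c \<in> C" "c \<inter> A = B" using sh by (auto simp: shat_def)
        then obtain h where h: "h \<in> H" "c = tr (restrict h S)" by (auto simp: C_def G_def restr_class_def)
        have "\<forall>a\<in>A. (h a = 1) = (a \<in> B)"
          using \<open>c \<inter> A = B\<close> h AS by (auto simp: tr_def)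
        then show "\<exists>h\<in>H. \<forall>a\<in>A. (h a = 1) = (a \<in> B)" using h by blast
      qed
      moreover have "finite A" using AS S by (meson rev_finite_subset)
      ultimately show "card A \<le> vc_dim d H" using vc_upper[OF fv] AS S by blast
    qed
  qed
  finally show ?thesis using finG by (simp add: G_def)
qed

lemma lnG_bound:
  fixes r :: real
  assumes fin: "finite S" and G1: "card G \<ge> 1"
    and cG: "card G \<le> card {A. A \<subseteq> S \<and> card A \<le> k}"
    and k: "k \<ge> 1" and rk: "real k \<le> r" and rn: "real (card S) \<le> r"
  shows "ln (real (card G)) \<le> real k * ln (exp 1 * r / real k)"
proof -
  have "real (card G) \<le> real (\<Sum>i\<le>k. card S choose i)"
    using cG card_small_subsets[OF fin, of k] by linarith
  also have "\<dots> \<le> (exp 1 * r / real k) ^ k" by (rule binom_sum_bound[OF k rk rn])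
  finally have le: "real (card G) \<le> (exp 1 * r / real k) ^ k" .
  have pos: "exp 1 * r / real k > 0" using k rk by simp
  have "ln (real (card G)) \<le> ln ((exp 1 * r / real k) ^ k)"
    using le G1 by (subst ln_le_cancel_iff) auto
  also have "\<dots> = real k * ln (exp 1 * r / real k)" using pos by (simp add: ln_realpow)
  finally show ?thesis .
qed

lemma pred_le_loss:
  assumes M: "M \<ge> 1" and fv: "\<forall>i<M. f (shift xt \<sigma> (zs xt i)) \<in> {-1, 1}" and y: "y \<in> {-1, 1}"
  shows "(if alg2_pred \<sigma> M zs f xt \<noteq> y then 1 else 0) \<le> alg2_loss \<sigma> M zs f xt y"
proof -
  define a where "a = (\<Sum>i<M. if f (shift xt \<sigma> (zs xt i)) = 1 then 1 else 0 :: real)"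
  define b where "b = (\<Sum>i<M. if f (shift xt \<sigma> (zs xt i)) \<noteq> y then 1 else 0 :: real)"
  have Mp: "real M > 0" using M by simp
  show ?thesis
  proof (cases "y = 1")
    case True
    have "a + b = (\<Sum>i<M. 1)" unfolding a_def b_def True by (subst sum.distrib[symmetric]) (intro sum.cong, auto)
    then have ab: "a + b = real M" by simp
    show ?thesis
    proof (cases "alg2_pred \<sigma> M zs f xt = y")
      case True then show ?thesis by (simp add: alg2_loss_def)
    next
      case False
      then have "1 / real M * a < 1/2" using \<open>y = 1\<close> unfolding alg2_pred_def a_def by (auto split: if_splits)
      then have "1 / real M * b \<ge> 1/2" using ab Mp by (simp add: field_simps)
      then show ?thesis using False unfolding alg2_loss_def b_def by simp
    qed
  next
    case False
    then have ym: "y = -1" using y by auto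
    have "b = a" unfolding a_def b_def using fv ym by (intro sum.cong) auto
    show ?thesis
    proof (cases "alg2_pred \<sigma> M zs f xt = y")
      case True then show ?thesis by (simp add: alg2_loss_def)
    next
      case False
      then have "1 / real M * a \<ge> 1/2" using ym unfolding alg2_pred_def a_def by (auto split: if_splits)
      then show ?thesis using False \<open>b = a\<close> unfolding alg2_loss_def b_def by simp
    qed
  qed
qed

lemma good_round:
  fixes h :: "(nat \<Rightarrow> real) \<Rightarrow> real"
  assumes s: "\<sigma> > 0" and e: "0 < \<epsilon>" "\<epsilon> \<le> 1" and x: "x \<in> Rd d" and xt: "xt \<in> Rd d"
    and dl: "l2dist d x xt \<le> alg2_gamma \<sigma> \<epsilon>"
    and hm: "(\<lambda>z. h (ext d z)) \<in> borel_measurable (PiM {..<d} (\<lambda>_. borel))"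
    and hv: "\<forall>p\<in>Rd d. h p \<in> {-1, 1}" and y: "y \<in> {-1, 1}" and M: "M \<ge> 1"
    and ptS: "\<forall>i<M. shift xt \<sigma> (zs xt i) \<in> S"
    and apx: "\<bar>gauss_prob d \<sigma> h xt y - (1 / real M) * (\<Sum>i<M. if h (shift xt \<sigma> (zs xt i)) = y then 1 else 0)\<bar> \<le> alg2_eps \<epsilon>"
    and big: "y * gauss_exp d \<sigma> h x > \<epsilon>"
  shows "alg2_loss \<sigma> M zs (restrict h S) xt y = 0"
proof -
  have hb: "\<forall>p\<in>Rd d. \<bar>h p\<bar> \<le> 1" using hv by auto
  have D: "\<bar>gauss_exp d \<sigma> h x - gauss_exp d \<sigma> h xt\<bar> \<le> \<epsilon> / 2"
    using gauss_exp_diff[OF s x xt hm hb] near_bound[OF s e dl] by linarith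
  have D1: "gauss_exp d \<sigma> h x - gauss_exp d \<sigma> h xt \<le> \<epsilon> / 2" using abs_le_D1[OF D] .
  have D2: "-(gauss_exp d \<sigma> h x - gauss_exp d \<sigma> h xt) \<le> \<epsilon> / 2" using abs_le_D2[OF D] .
  have "y * gauss_exp d \<sigma> h xt > \<epsilon> / 2"
  proof (cases "y = 1")
    case True then show ?thesis using big D1 D2 by simp
  next
    case False then have "y = -1" using y by auto
    then show ?thesis using big D1 D2 by simp
  qed
  then have P: "gauss_prob d \<sigma> h xt y > 1/2 + \<epsilon>/4"
    using gauss_exp_prob[OF xt hm hv y, of \<sigma>] by simp
  define fe where "fe = (\<Sum>i<M. if h (shift xt \<sigma> (zs xt i)) = y then 1 else 0 :: real)"
  define fn where "fn = (\<Sum>i<M. if restrict h S (shift xt \<sigma> (zs xt i)) \<noteq> y then 1 else 0 :: real)"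
  have Mp: "real M > 0" using M by simp
  have fe: "(1 / real M) * fe > 1/2" using apx P unfolding fe_def alg2_eps_def by linarith
  have "fe + fn = (\<Sum>i<M. 1)" unfolding fe_def fn_def
    by (subst sum.distrib[symmetric]) (intro sum.cong, auto simp: ptS)
  then have "fe + fn = real M" by simp
  then have "(1 / real M) * fn < 1/2" using fe Mp by (simp add: field_simps)
  then show ?thesis unfolding alg2_loss_def fn_def by simp
qed

lemma main_bound:
  fixes CM :: real and d :: nat and X :: "(nat \<Rightarrow> real) set" and \<sigma> \<epsilon> :: real
    and H :: "((nat \<Rightarrow> real) \<Rightarrow> real) set" and T :: nat and x :: "nat \<Rightarrow> nat \<Rightarrow> real"
    and y :: "nat \<Rightarrow> real" and Z :: "(nat \<Rightarrow> real) set" and \<phi> :: "(nat \<Rightarrow> real) \<Rightarrow> (nat \<Rightarrow> real)"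
    and M :: nat and zs :: "(nat \<Rightarrow> real) \<Rightarrow> nat \<Rightarrow> (nat \<Rightarrow> real)"
  assumes CM: "CM > 0"
    and hX: "X \<subseteq> Rd d" and s: "0 < \<sigma>" and e0: "0 < \<epsilon>" and e1: "\<epsilon> \<le> 1" and Hne: "H \<noteq> {}"
    and hv: "\<forall>h\<in>H. \<forall>p\<in>Rd d. h p \<in> {-1, 1}"
    and hm: "\<forall>h\<in>H. (\<lambda>z. h (ext d z)) \<in> borel_measurable (PiM {..<d} (\<lambda>_. borel))"
    and fv: "finite_vc d H"
    and xy: "\<forall>t<T. x t \<in> X \<and> y t \<in> {-1, 1}"
    and hsetup: "alg2_setup d X \<sigma> \<epsilon> H Z \<phi> M zs"
    and Mb: "real M \<le> CM * max 1 (real (vc_dim d H)) / (alg2_eps \<epsilon>)\<^sup>2"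
  shows "alg2_expected_mistakes \<sigma> H Z \<phi> M zs T x y - opt_gauss d \<sigma> \<epsilon> H T x y
        \<le> sqrt (real T * real (vc_dim d H) *
                ln (max 1 (16 * CM) * exp 1 * real (covering_number d X (sqrt (pi / 32) * \<sigma> * \<epsilon>)) / \<epsilon>\<^sup>2))"
proof -
  define c where "c = max 1 (16 * CM)"
  define \<gamma> where "\<gamma> = alg2_gamma \<sigma> \<epsilon>"
  from hsetup have finZ: "finite Z" and cov: "is_cover d X \<gamma> Z"
    and minZ: "\<forall>Z'. finite Z' \<and> is_cover d X \<gamma> Z' \<longrightarrow> card Z \<le> card Z'"
    and phi: "\<forall>x\<in>X. \<phi> x \<in> Z \<and> l2dist d x (\<phi> x) \<le> \<gamma>"
    and M1: "M \<ge> 1" and zsR: "\<forall>xt\<in>Z. \<forall>i<M. zs xt i \<in> Rd d"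
    and apx: "\<forall>xt\<in>Z. \<forall>y\<in>{-1, 1}. \<forall>h\<in>H.
        \<bar>gauss_prob d \<sigma> h xt y - (1 / real M) * (\<Sum>i<M. if h (shift xt \<sigma> (zs xt i)) = y then 1 else 0)\<bar>
        \<le> alg2_eps \<epsilon>"
    unfolding alg2_setup_def \<gamma>_def by blast+
  define k where "k = vc_dim d H"
  define S where "S = alg2_S Z \<sigma> M zs"
  define G where "G = restr_class H S"
  define N where "N = card Z"
  define eta where "eta = sqrt (8 * ln (real (card G)) / real T)"
  define L where "L = (\<lambda>t h. alg2_loss \<sigma> M zs h (\<phi> (x t)) (y t))"
  define mis where "mis = (\<lambda>t h. if alg2_pred \<sigma> M zs h (\<phi> (x t)) \<noteq> y t then 1 else (0::real))"
  have EM: "alg2_expected_mistakes \<sigma> H Z \<phi> M zs T x y = (\<Sum>t<T. \<Sum>g\<in>G. hedge G eta L t g * mis t g)"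
    unfolding alg2_expected_mistakes_def Let_def G_def eta_def L_def S_def mis_def by simp
  define bad where "bad = (\<lambda>h t. y t * gauss_exp d \<sigma> h (x t) \<le> \<epsilon>)"
  define cnt where "cnt = (\<lambda>h. card {t\<in>{..<T}. bad h t})"
  have OPT: "opt_gauss d \<sigma> \<epsilon> H T x y = real (Min (cnt ` H))"
    unfolding opt_gauss_def cnt_def bad_def ..
  have fin_cnt: "finite (cnt ` H)"
  proof (rule finite_subset)
    show "cnt ` H \<subseteq> {..T}"
    proof
      fix n assume "n \<in> cnt ` H"
      then obtain h where "n = cnt h" by auto
      have "cnt h \<le> card {..<T}" unfolding cnt_def by (rule card_mono) auto
      then show "n \<in> {..T}" using \<open>n = cnt h\<close> by simp
    qed
  qed simp
  obtain hs where hs: "hs \<in> H" "Min (cnt ` H) = cnt hs"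
    using Min_in[OF fin_cnt] Hne by auto
  have Onn: "opt_gauss d \<sigma> \<epsilon> H T x y \<ge> 0" unfolding OPT by simp
  show ?thesis
  proof (cases "T = 0")
    case True
    then have "alg2_expected_mistakes \<sigma> H Z \<phi> M zs T x y = 0" unfolding EM by simp
    then show ?thesis using Onn True by simp
  next
    case False
    then have T: "T > 0" by simp
    have ZX: "Z \<subseteq> X" using cov by (simp add: is_cover_def)
    have ZR: "Z \<subseteq> Rd d" using ZX hX by auto
    have x0: "x 0 \<in> X" using xy T by auto
    then obtain z0 where "z0 \<in> Z" using cov by (auto simp: is_cover_def)
    then have N1: "N \<ge> 1" using finZ by (simp add: N_def Suc_le_eq card_gt_0_iff) blast
    have covN: "covering_number d X (sqrt (pi / 32) * \<sigma> * \<epsilon>) = N"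
      unfolding covering_number_def gamma_eq[symmetric] \<gamma>_def[symmetric] N_def
    proof (rule Least_equality)
      show "\<exists>Z'. finite Z' \<and> is_cover d X \<gamma> Z' \<and> card Z' = card Z" using finZ cov by blast
    next
      fix n assume "\<exists>Z'. finite Z' \<and> is_cover d X \<gamma> Z' \<and> card Z' = n"
      then show "card Z \<le> n" using minZ by blast
    qed
    have Sdef: "S = (\<Union>xt\<in>Z. (\<lambda>i. shift xt \<sigma> (zs xt i)) ` {..<M})"
      unfolding S_def alg2_S_def by (auto simp: image_def)
    have SR: "S \<subseteq> Rd d"
    proof
      fix p assume "p \<in> S"
      then obtain xt i where "xt \<in> Z" "i < M" "p = shift xt \<sigma> (zs xt i)" by (auto simp: Sdef)
      moreover then have "xt \<in> Rd d" "zs xt i \<in> Rd d" using ZR zsR by auto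
      ultimately show "p \<in> Rd d" by (simp add: Rd_def shift_def)
    qed
    have finS: "finite S" unfolding Sdef using finZ by auto
    have cardS: "card S \<le> N * M"
    proof -
      have "card S \<le> (\<Sum>xt\<in>Z. card ((\<lambda>i. shift xt \<sigma> (zs xt i)) ` {..<M}))"
        unfolding Sdef by (rule card_UN_le[OF finZ])
      also have "\<dots> \<le> (\<Sum>xt\<in>Z. M)" by (intro sum_mono) (metis card_image_le card_lessThan finite_lessThan)
      finally show ?thesis by (simp add: N_def)
    qed
    have ptS: "\<forall>i<M. shift xt \<sigma> (zs xt i) \<in> S" if "xt \<in> Z" for xt
      using that by (auto simp: Sdef)
    from card_G_bound[OF finS SR hv fv] have finG: "finite G"
      and cardG: "card G \<le> card {A. A \<subseteq> S \<and> card A \<le> k}" by (simp_all add: G_def k_def)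
    have Gne: "G \<noteq> {}" using Hne by (simp add: G_def restr_class_def)
    have G1: "card G \<ge> 1" using finG Gne by (simp add: Suc_le_eq card_gt_0_iff)
    define gs where "gs = restrict hs S"
    have gsG: "gs \<in> G" using hs by (simp add: gs_def G_def restr_class_def)
    have L01: "L t g \<in> {0, 1}" for t g by (simp add: L_def alg2_loss_def)
    have regret: "(\<Sum>t<T. \<Sum>g\<in>G. hedge G eta L t g * L t g) \<le> (\<Sum>t<T. L t gs) + sqrt (real T * ln (real (card G)) / 2)"
      by (rule hedge_regret[OF finG Gne L01 gsG T eta_def])
    have Pnn: "hedge G eta L t g \<ge> 0" for t g
      using hedge_closed[OF finG Gne, of eta L t g] finG Gne
      by (simp add: divide_nonneg_nonneg sum_nonneg)
    have mis_le: "(\<Sum>t<T. \<Sum>g\<in>G. hedge G eta L t g * mis t g) \<le> (\<Sum>t<T. \<Sum>g\<in>G. hedge G eta L t g * L t g)"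
    proof (intro sum_mono mult_left_mono Pnn)
      fix t g assume t: "t \<in> {..<T}" and g: "g \<in> G"
      then obtain h where h: "h \<in> H" "g = restrict h S" by (auto simp: G_def restr_class_def)
      have xtZ: "\<phi> (x t) \<in> Z" using phi xy t by auto
      have "\<forall>i<M. g (shift (\<phi> (x t)) \<sigma> (zs (\<phi> (x t)) i)) \<in> {-1, 1}"
        using ptS[OF xtZ] SR hv h by auto
      then show "mis t g \<le> L t g" unfolding mis_def L_def
        using pred_le_loss[OF M1 _, of g "\<phi> (x t)" \<sigma> zs "y t"] xy t by auto
    qed
    have Lgs: "(\<Sum>t<T. L t gs) \<le> opt_gauss d \<sigma> \<epsilon> H T x y"
    proof -
      have "(\<Sum>t<T. L t gs) \<le> (\<Sum>t<T. if bad hs t then 1 else 0)"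
      proof (intro sum_mono)
        fix t assume t: "t \<in> {..<T}"
        show "L t gs \<le> (if bad hs t then 1 else 0)"
        proof (cases "bad hs t")
          case True then show ?thesis using L01[of t gs] by auto
        next
          case False
          have xt: "x t \<in> X" "y t \<in> {-1, 1}" using xy t by auto
          have xtZ: "\<phi> (x t) \<in> Z" and dl: "l2dist d (x t) (\<phi> (x t)) \<le> \<gamma>" using phi xt by auto
          have "alg2_loss \<sigma> M zs (restrict hs S) (\<phi> (x t)) (y t) = 0"
          proof (rule good_round[OF s e0 e1])
            show "x t \<in> Rd d" using xt hX by auto
            show "\<phi> (x t) \<in> Rd d" using xtZ ZR by auto
            show "l2dist d (x t) (\<phi> (x t)) \<le> alg2_gamma \<sigma> \<epsilon>" using dl by (simp add: \<gamma>_def)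
            show "(\<lambda>z. hs (ext d z)) \<in> borel_measurable (PiM {..<d} (\<lambda>_. borel))" using hm hs by auto
            show "\<forall>p\<in>Rd d. hs p \<in> {-1, 1}" using hv hs by auto
            show "y t \<in> {-1, 1}" by (rule xt)
            show "M \<ge> 1" by (rule M1)
            show "\<forall>i<M. shift (\<phi> (x t)) \<sigma> (zs (\<phi> (x t)) i) \<in> S" by (rule ptS[OF xtZ])
            show "\<bar>gauss_prob d \<sigma> hs (\<phi> (x t)) (y t) - (1 / real M) * (\<Sum>i<M. if hs (shift (\<phi> (x t)) \<sigma> (zs (\<phi> (x t)) i)) = y t then 1 else 0)\<bar> \<le> alg2_eps \<epsilon>"
              using apx xtZ xt hs by blast
            show "y t * gauss_exp d \<sigma> hs (x t) > \<epsilon>" using False by (simp add: bad_def)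
          qed
          then show ?thesis using False by (simp add: L_def gs_def)
        qed
      qed
      also have "\<dots> = real (cnt hs)"
        unfolding cnt_def by (simp add: sum.If_cases Int_def conj_commute)
      also have "\<dots> = opt_gauss d \<sigma> \<epsilon> H T x y" unfolding OPT hs(2) ..
      finally show ?thesis .
    qed
    have lnG0: "ln (real (card G)) \<ge> 0" using G1 by simp
    have c1: "c \<ge> 1" by (simp add: c_def)
    have final: "sqrt (real T * ln (real (card G)) / 2) \<le> sqrt (real T * real k * ln (c * exp 1 * real N / \<epsilon>\<^sup>2))"
    proof (cases "k = 0")
      case True
      have "{A. A \<subseteq> S \<and> card A \<le> k} = {{}}" using True finS by (auto dest: rev_finite_subset[OF finS])
      then have "card G = 1" using cardG G1 by simp
      then show ?thesis using True by simp
    next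
      case False
      then have k1: "k \<ge> 1" by simp
      define r where "r = c * real N * real k / \<epsilon>\<^sup>2"
      have e2: "\<epsilon>\<^sup>2 > 0" "\<epsilon>\<^sup>2 \<le> 1" using e0 e1 by (auto simp: power_le_one)
      have cN: "c * real N \<ge> 1" using c1 N1 by (metis mult_mono' of_nat_1 of_nat_mono mult_1_right zero_le_one)
      have rk: "real k \<le> r"
      proof -
        have "1 \<le> c * real N / \<epsilon>\<^sup>2" using cN e2 by (simp add: field_simps)
        then have "real k * 1 \<le> real k * (c * real N / \<epsilon>\<^sup>2)" by (intro mult_left_mono) auto
        then show ?thesis by (simp add: r_def field_simps)
      qed
      have rn: "real (card S) \<le> r"
      proof -
        have "real M \<le> CM * real k * 16 / \<epsilon>\<^sup>2"
          using Mb k1 by (simp add: k_def alg2_eps_def power_divide max_def)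
        also have "\<dots> \<le> c * real k / \<epsilon>\<^sup>2"
        proof (rule divide_right_mono)
          have "CM * 16 \<le> c" by (simp add: c_def)
          then have "CM * 16 * real k \<le> c * real k" by (intro mult_right_mono) auto
          then show "CM * real k * 16 \<le> c * real k" by (simp add: algebra_simps)
        qed (use e2 in simp)
        finally have "real M \<le> c * real k / \<epsilon>\<^sup>2" .
        then have "real N * real M \<le> real N * (c * real k / \<epsilon>\<^sup>2)" by (intro mult_left_mono) auto
        moreover have "real (card S) \<le> real N * real M" using cardS by (metis of_nat_mono of_nat_mult)
        ultimately show ?thesis by (simp add: r_def field_simps)
      qed
      have "ln (real (card G)) \<le> real k * ln (exp 1 * r / real k)"
        by (rule lnG_bound[OF finS G1 cardG k1 rk rn])
      also have "exp 1 * r / real k = c * exp 1 * real N / \<epsilon>\<^sup>2"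
        using k1 by (simp add: r_def field_simps)
      finally have "ln (real (card G)) \<le> real k * ln (c * exp 1 * real N / \<epsilon>\<^sup>2)" .
      then have a: "real T * ln (real (card G)) \<le> real T * (real k * ln (c * exp 1 * real N / \<epsilon>\<^sup>2))"
        by (intro mult_left_mono) auto
      have "real T * ln (real (card G)) / 2 \<le> real T * ln (real (card G))"
        using lnG0 by simp
      then have "real T * ln (real (card G)) / 2 \<le> real T * (real k * ln (c * exp 1 * real N / \<epsilon>\<^sup>2))"
        using a by linarith
      then show ?thesis by (simp add: mult.assoc)
    qed
    have "alg2_expected_mistakes \<sigma> H Z \<phi> M zs T x y \<le> opt_gauss d \<sigma> \<epsilon> H T x y + sqrt (real T * ln (real (card G)) / 2)"
      unfolding EM using mis_le regret Lgs by linarith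
    then show ?thesis using final unfolding covN k_def[symmetric] c_def[symmetric] by linarith
  qed
qed

theorem theorem6:
  shows "\<forall>CM::real. CM > 0 \<longrightarrow> (\<exists>c::real. c > 0 \<and>
    (\<forall>(d::nat) (X::(nat \<Rightarrow> real) set) (\<sigma>::real) (\<epsilon>::real) (H::((nat \<Rightarrow> real) \<Rightarrow> real) set)
       (T::nat) (x::nat \<Rightarrow> nat \<Rightarrow> real) (y::nat \<Rightarrow> real)
       (Z::(nat \<Rightarrow> real) set) (\<phi>::(nat \<Rightarrow> real) \<Rightarrow> (nat \<Rightarrow> real)) (M::nat)
       (zs::(nat \<Rightarrow> real) \<Rightarrow> nat \<Rightarrow> (nat \<Rightarrow> real)).
      X \<subseteq> Rd d \<and> 0 < \<sigma> \<and> 0 < \<epsilon> \<and> \<epsilon> \<le> 1 \<and>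
      H \<noteq> {} \<and> (\<forall>h\<in>H. \<forall>p\<in>Rd d. h p \<in> {-1, 1}) \<and>
      (\<forall>h\<in>H. (\<lambda>z. h (ext d z)) \<in> borel_measurable (PiM {..<d} (\<lambda>_. borel))) \<and>
      finite_vc d H \<and>
      (\<forall>t<T. x t \<in> X \<and> y t \<in> {-1, 1}) \<and>
      alg2_setup d X \<sigma> \<epsilon> H Z \<phi> M zs \<and>
      real M \<le> CM * max 1 (real (vc_dim d H)) / (alg2_eps \<epsilon>)\<^sup>2
      \<longrightarrow>
      alg2_expected_mistakes \<sigma> H Z \<phi> M zs T x y - opt_gauss d \<sigma> \<epsilon> H T x y
        \<le> sqrt (real T * real (vc_dim d H) *
                ln (c * exp 1 * real (covering_number d X (sqrt (pi / 32) * \<sigma> * \<epsilon>)) / \<epsilon>\<^sup>2))))"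
    apply (intro allI impI)
  subgoal for CM
    apply (rule exI[of _ "max 1 (16 * CM)"])
    apply (intro conjI allI impI)
     apply simp
    apply (elim conjE)
    apply (rule main_bound; assumption)
    done
  done

end
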